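(* Let $M$ be a matroid on the ground set $E$ and let $\ell:E\to\mathbb{R}$ be a generic real-valued function. Then: (A) The order $<_\ell$ of $\mathcal{B}(M)$ induced by ordering the $\ell$-weights is a shelling order of the independence complex $\mathcal{I}(M)$. (B) For every basis $B$, the restriction set of $B$ in the shelling order $<_\ell$ is the internally passive set of $B$ with respect to the total order on $E$ induced by $\ell$.
   Context: For a matroid $M$ on finite set $E$, $\mathcal{I}(M)$ is its independence complex and $\mathcal{B}(M)$ its set of bases. For $A\subseteq E$, the $\ell$-weight is $\ell(A)=\sum_{a\in A}\ell(a)$. Generic means $\ell$ takes distinct values on elements of $E$ and distinct weights on distinct bases; $<_\ell$ is defined by $B<_\ell B'$ iff $\ell(B)<\ell(B')$, and the total order on $E$ induced by $\ell$ is $e<e'$ iff $\ell(e)<\ell(e')$. A shelling order of a pure simplicial complex is a total order $F_1<\dots<F_k$ of its facets such that for each $j\ge2$, $\langle F_1,\dots,F_{j-1}\rangle\cap\langle F_j\rangle$ is pure of dimension one less than the complex. For a shelling order, the restriction set $\mathcal{R}(F_j)$ is the unique subset of $F_j$ such that the faces of $\langle F_1,\dots,F_j\rangle$ not in $\langle F_1,\dots,F_{j-1}\rangle$ are exactly the subsets of $F_j$ containing $\mathcal{R}(F_j)$. For a total order $<$ on $E$ and a basis $B$, the internally passive set $IP_<(B)$ is the set of $b\in B$ for which there exists $b'\notin B$ with $b'<b$ and $(B\setminus\{b\})\cup\{b'\}$ a basis. *)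

theory Defs
  imports Complex_Main
begin

definition matroid :: "'a set \<Rightarrow> 'a set set \<Rightarrow> bool" where
  "matroid E Ind \<longleftrightarrow>
     finite E \<and> (\<forall>X\<in>Ind. X \<subseteq> E) \<and> {} \<in> Ind \<and>
     (\<forall>X Y. Y \<in> Ind \<and> X \<subseteq> Y \<longrightarrow> X \<in> Ind) \<and>
     (\<forall>X Y. X \<in> Ind \<and> Y \<in> Ind \<and> card X < card Y \<longrightarrow>
        (\<exists>y\<in>Y - X. insert y X \<in> Ind))"

definition facets :: "'a set set \<Rightarrow> 'a set set" where
  "facets K = {F\<in>K. \<forall>G\<in>K. F \<subseteq> G \<longrightarrow> G = F}"

definition bases :: "'a set set \<Rightarrow> 'a set set" where
  "bases Ind = facets Ind"

definition weight :: "('a \<Rightarrow> real) \<Rightarrow> 'a set \<Rightarrow> real" where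
  "weight l A = (\<Sum>a\<in>A. l a)"

definition generic :: "'a set \<Rightarrow> 'a set set \<Rightarrow> ('a \<Rightarrow> real) \<Rightarrow> bool" where
  "generic E Ind l \<longleftrightarrow> inj_on l E \<and> inj_on (weight l) (bases Ind)"

definition gen :: "'a set list \<Rightarrow> 'a set set" where
  "gen Fs = {S. \<exists>F\<in>set Fs. S \<subseteq> F}"

text \<open>K is pure with all facets of cardinality d (i.e. of dimension d - 1).\<close>
definition pure_card :: "'a set set \<Rightarrow> nat \<Rightarrow> bool" where
  "pure_card K d \<longleftrightarrow> (\<forall>S\<in>K. \<exists>T\<in>K. S \<subseteq> T \<and> card T = d) \<and> (\<forall>T\<in>K. card T \<le> d)"

definition shelling_order :: "'a set set \<Rightarrow> 'a set list \<Rightarrow> bool" where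
  "shelling_order K Fs \<longleftrightarrow>
     distinct Fs \<and> set Fs = facets K \<and>
     (\<exists>d. pure_card K d \<and>
        (\<forall>j. 0 < j \<and> j < length Fs \<longrightarrow>
           pure_card (gen (take j Fs) \<inter> gen [Fs ! j]) (d - 1)))"

definition restriction_set :: "'a set list \<Rightarrow> nat \<Rightarrow> 'a set" where
  "restriction_set Fs j =
     (THE R. R \<subseteq> Fs ! j \<and>
        gen (take (Suc j) Fs) - gen (take j Fs) = {S. R \<subseteq> S \<and> S \<subseteq> Fs ! j})"

definition internally_passive :: "'a set \<Rightarrow> 'a set set \<Rightarrow> ('a \<Rightarrow> real) \<Rightarrow> 'a set \<Rightarrow> 'a set" where
  "internally_passive E Ind l B =
     {b\<in>B. \<exists>b'\<in>E - B. l b' < l b \<and> (B - {b}) \<union> {b'} \<in> bases Ind}"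

end

theory Submission imports Defs begin

lemma m_fin: "matroid E Ind \<Longrightarrow> X \<in> Ind \<Longrightarrow> finite X"
  unfolding matroid_def by (meson finite_subset)

lemma m_sub: "matroid E Ind \<Longrightarrow> X \<in> Ind \<Longrightarrow> X \<subseteq> E"
  unfolding matroid_def by blast

lemma m_down: "matroid E Ind \<Longrightarrow> Y \<in> Ind \<Longrightarrow> X \<subseteq> Y \<Longrightarrow> X \<in> Ind"
  unfolding matroid_def by blast

lemma m_aug: "matroid E Ind \<Longrightarrow> X \<in> Ind \<Longrightarrow> Y \<in> Ind \<Longrightarrow> card X < card Y \<Longrightarrow> \<exists>y\<in>Y - X. insert y X \<in> Ind"
  unfolding matroid_def by blast

lemma basis_ind: "B \<in> bases Ind \<Longrightarrow> B \<in> Ind"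
  unfolding bases_def facets_def by blast

lemma basis_max: "B \<in> bases Ind \<Longrightarrow> G \<in> Ind \<Longrightarrow> B \<subseteq> G \<Longrightarrow> G = B"
  unfolding bases_def facets_def by blast

lemma ind_card_le:
  assumes m: "matroid E Ind" and X: "X \<in> Ind" and B: "B \<in> bases Ind"
  shows "card X \<le> card B"
proof (rule ccontr)
  assume "\<not> ?thesis"
  then have "card B < card X" by simp
  then obtain y where y: "y \<in> X - B" "insert y B \<in> Ind"
    using m_aug[OF m basis_ind[OF B] X] by blast
  then have "insert y B = B" using basis_max[OF B y(2)] by blast
  with y show False by blast
qed

lemma bases_card_eq:
  assumes m: "matroid E Ind" and "B \<in> bases Ind" "B' \<in> bases Ind"
  shows "card B = card B'"
  using ind_card_le[OF m basis_ind[OF assms(2)] assms(3)] ind_card_le[OF m basis_ind[OF assms(3)] assms(2)]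
  by simp

lemma ind_card_basis:
  assumes m: "matroid E Ind" and X: "X \<in> Ind" and B: "B \<in> bases Ind" and c: "card X = card B"
  shows "X \<in> bases Ind"
  unfolding bases_def facets_def
proof (intro CollectI conjI ballI impI)
  show "X \<in> Ind" by fact
  fix G assume G: "G \<in> Ind" "X \<subseteq> G"
  have "card G \<le> card X" using ind_card_le[OF m G(1) B] c by simp
  then show "G = X" using G m_fin[OF m G(1)] card_seteq[of G X] by auto
qed

lemma extend_basis:
  assumes m: "matroid E Ind" and B: "B \<in> bases Ind"
  shows "X \<in> Ind \<Longrightarrow> X \<subseteq> Z \<Longrightarrow> B \<subseteq> Z \<Longrightarrow> \<exists>J\<in>bases Ind. X \<subseteq> J \<and> J \<subseteq> Z"
proof (induction "card B - card X" arbitrary: X rule: less_induct)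
  case less
  show ?case
  proof (cases "card X = card B")
    case True
    then show ?thesis using ind_card_basis[OF m less(2) B] less by blast
  next
    case False
    then have "card X < card B" using ind_card_le[OF m less(2) B] by simp
    then obtain y where y: "y \<in> B - X" "insert y X \<in> Ind"
      using m_aug[OF m less(2) basis_ind[OF B]] by blast
    have fx: "finite X" using m_fin[OF m less(2)] .
    have "card (insert y X) = Suc (card X)" using y fx by simp
    then have "card B - card (insert y X) < card B - card X" using \<open>card X < card B\<close> by simp
    from less(1)[OF this y(2)] y less(3,4) show ?thesis by blast
  qed
qed

lemma basis_exists:
  assumes m: "matroid E Ind" shows "\<exists>B. B \<in> bases Ind"
proof -
  have "{} \<in> Ind" using m unfolding matroid_def by blast
  moreover have "\<forall>Y. Y \<in> Ind \<longrightarrow> card Y < Suc (card E)"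
    using m_sub[OF m] m unfolding matroid_def by (meson card_mono less_Suc_eq_le)
  ultimately obtain X where X: "X \<in> Ind" "\<forall>Y. Y \<in> Ind \<longrightarrow> card Y \<le> card X"
    using ex_has_greatest_nat[of "\<lambda>Y. Y \<in> Ind" "{}" card] by blast
  have "X \<in> bases Ind" unfolding bases_def facets_def
  proof (intro CollectI conjI ballI impI)
    show "X \<in> Ind" by fact
    fix G assume G: "G \<in> Ind" "X \<subseteq> G"
    then show "G = X" using X G m_fin[OF m G(1)] card_seteq[of G X] by auto
  qed
  then show ?thesis by blast
qed

lemma sum_count:
  fixes X Y :: "real set"
  shows "finite X \<Longrightarrow> finite Y \<Longrightarrow> card X = card Y \<Longrightarrow>
    (\<forall>t. card {x\<in>X. x < t} \<le> card {y\<in>Y. y < t}) \<Longrightarrow> sum id Y \<le> sum id X"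
proof (induction "card X" arbitrary: X Y)
  case 0
  then show ?case by simp
next
  case (Suc n)
  then have ne: "X \<noteq> {}" "Y \<noteq> {}" by auto
  define x0 where "x0 = Min X"
  define y0 where "y0 = Min Y"
  have x0: "x0 \<in> X" "\<forall>x\<in>X. x0 \<le> x" using Suc ne x0_def by auto
  have y0: "y0 \<in> Y" "\<forall>y\<in>Y. y0 \<le> y" using Suc ne y0_def by auto
  have "{y\<in>Y. y < y0} = {}" using y0 by force
  then have "card {y\<in>Y. y < y0} = 0" by (simp only: card.empty)
  then have "card {x\<in>X. x < y0} = 0" using Suc.prems(4) by (metis le_zero_eq)
  then have "{x\<in>X. x < y0} = {}" using Suc.prems(1) by simp
  then have le: "y0 \<le> x0" using x0 by force
  have IH: "sum id (Y - {y0}) \<le> sum id (X - {x0})"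
  proof (rule Suc.hyps(1))
    show "n = card (X - {x0})" using Suc.hyps(2) x0 by simp
    show "finite (X - {x0})" "finite (Y - {y0})" using Suc.prems by auto
    show "card (X - {x0}) = card (Y - {y0})" using Suc.prems x0 y0 by simp
    show "\<forall>t. card {x \<in> X - {x0}. x < t} \<le> card {y \<in> Y - {y0}. y < t}"
    proof
      fix t
      show "card {x \<in> X - {x0}. x < t} \<le> card {y \<in> Y - {y0}. y < t}"
      proof (cases "x0 < t")
        case True
        have a: "{x \<in> X - {x0}. x < t} = {x \<in> X. x < t} - {x0}" by auto
        have b: "{y \<in> Y - {y0}. y < t} = {y \<in> Y. y < t} - {y0}" by auto
        have "card ({x \<in> X. x < t} - {x0}) = card {x \<in> X. x < t} - 1"
          using True x0 Suc.prems by (simp add: card_Diff_singleton)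
        moreover have "card ({y \<in> Y. y < t} - {y0}) = card {y \<in> Y. y < t} - 1"
          using True y0 le Suc.prems by (simp add: card_Diff_singleton)
        ultimately show ?thesis using a b Suc.prems(4) by (metis diff_le_mono)
      next
        case False
        then have "{x \<in> X - {x0}. x < t} = {}" using x0 by force
        then show ?thesis by (metis card.empty le0)
      qed
    qed
  qed
  have "sum id X = x0 + sum id (X - {x0})" using x0 Suc.prems by (simp add: sum.remove)
  moreover have "sum id Y = y0 + sum id (Y - {y0})" using y0 Suc.prems by (simp add: sum.remove)
  ultimately show ?case using IH le by simp
qed


lemma key:
  assumes m: "matroid E Ind" and A: "A \<in> bases Ind" and B: "B \<in> bases Ind"
    and inj: "inj_on l E" and w: "weight l A < weight l B"
  shows "\<exists>b\<in>B - A. \<exists>a\<in>A - B. l a < l b \<and> (B - {b}) \<union> {a} \<in> bases Ind"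
proof -
  have fA: "finite A" and fB: "finite B" using m_fin[OF m basis_ind] A B by auto
  have sA: "A \<subseteq> E" and sB: "B \<subseteq> E" using m_sub[OF m basis_ind] A B by auto
  have cAB: "card A = card B" using bases_card_eq[OF m A B] .
  have cA: "card A = card (A \<inter> B) + card (A - B)"
    using fA by (metis Int_Diff_disjoint Int_Diff_Un card_Un_disjoint finite_Diff finite_Int)
  have cB: "card B = card (A \<inter> B) + card (B - A)"
    using fB by (metis Int_Diff_disjoint Int_Diff_Un card_Un_disjoint finite_Diff finite_Int Int_commute)
  have cD: "card (A - B) = card (B - A)" using cA cB cAB by simp
  have wA: "sum l A = sum l (A \<inter> B) + sum l (A - B)"
    using fA by (metis Int_Diff_disjoint Int_Diff_Un sum.union_disjoint finite_Diff finite_Int)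
  have wB: "sum l B = sum l (A \<inter> B) + sum l (B - A)"
    using fB by (metis Int_Diff_disjoint Int_Diff_Un sum.union_disjoint finite_Diff finite_Int Int_commute)
  have wD: "sum l (A - B) < sum l (B - A)" using w wA wB unfolding weight_def by simp
  have injA: "inj_on l (A - B)" and injB: "inj_on l (B - A)" using inj sA sB
    by (meson Diff_subset inj_on_subset)+
  have cnt: "card {x\<in>l ` P. x < t} = card {p\<in>P. l p < t}" if "inj_on l P" for P t
  proof -
    have "{x\<in>l ` P. x < t} = l ` {p\<in>P. l p < t}" by auto
    moreover have "inj_on l {p\<in>P. l p < t}" using that by (rule inj_on_subset) auto
    ultimately show ?thesis by (simp add: card_image)
  qed
  obtain t where t: "card {b\<in>B - A. l b < t} < card {a\<in>A - B. l a < t}"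
  proof -
    have "\<exists>t. card {b\<in>B - A. l b < t} < card {a\<in>A - B. l a < t}"
    proof (rule ccontr)
      assume "\<not> ?thesis"
      then have "\<forall>t. card {x\<in>l ` (A - B). x < t} \<le> card {y\<in>l ` (B - A). y < t}"
        using cnt[OF injA] cnt[OF injB] by (simp add: not_less)
      moreover have "card (l ` (A - B)) = card (l ` (B - A))"
        using cD injA injB by (simp add: card_image)
      ultimately have "sum id (l ` (B - A)) \<le> sum id (l ` (A - B))"
        using sum_count[of "l ` (A - B)" "l ` (B - A)"] fA fB by auto
      then have "sum l (B - A) \<le> sum l (A - B)" using injA injB by (simp add: sum.reindex)
      then show False using wD by simp
    qed
    then show ?thesis using that by blast
  qed
  define Y0 where "Y0 = (A \<inter> B) \<union> {b\<in>B - A. l b < t}"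
  define X0 where "X0 = (A \<inter> B) \<union> {a\<in>A - B. l a < t}"
  have Y0i: "Y0 \<in> Ind" using m_down[OF m basis_ind[OF B]] Y0_def by auto
  have X0i: "X0 \<in> Ind" using m_down[OF m basis_ind[OF A]] X0_def by auto
  have "card Y0 = card (A \<inter> B) + card {b\<in>B - A. l b < t}"
    unfolding Y0_def using fA fB by (subst card_Un_disjoint) auto
  moreover have "card X0 = card (A \<inter> B) + card {a\<in>A - B. l a < t}"
    unfolding X0_def using fA fB by (subst card_Un_disjoint) auto
  ultimately have "card Y0 < card X0" using t by simp
  then obtain a where a: "a \<in> X0 - Y0" "insert a Y0 \<in> Ind"
    using m_aug[OF m Y0i X0i] by blast
  have aAB: "a \<in> A - B" and lat: "l a < t" using a(1) unfolding X0_def Y0_def by auto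
  obtain J where J: "J \<in> bases Ind" "insert a Y0 \<subseteq> J" "J \<subseteq> insert a B"
    using extend_basis[OF m B a(2), of "insert a B"] Y0_def by auto
  have cJ: "card J = card B" using bases_card_eq[OF m J(1) B] .
  have "\<not> insert a B \<subseteq> J"
  proof
    assume "insert a B \<subseteq> J"
    then have "card (insert a B) \<le> card J" using m_fin[OF m basis_ind[OF J(1)]] by (simp add: card_mono)
    then show False using cJ fB aAB by simp
  qed
  then obtain b where b: "b \<in> insert a B" "b \<notin> J" by blast
  have ba: "b \<noteq> a" using b J(2) by blast
  have bB: "b \<in> B" using b ba by simp
  have bY: "b \<notin> Y0" using b J(2) by blast
  have bBA: "b \<in> B - A" and lbt: "\<not> l b < t" using bB bY unfolding Y0_def by auto
  have Jsub: "J \<subseteq> (B - {b}) \<union> {a}" using J(3) b by auto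
  have "card ((B - {b}) \<union> {a}) = card B" using fB bB aAB card_gt_0_iff[of B] by (auto simp add: card_Diff_singleton)
  then have "J = (B - {b}) \<union> {a}" using Jsub cJ fB card_seteq[of "(B - {b}) \<union> {a}" J] by auto
  then have "(B - {b}) \<union> {a} \<in> bases Ind" using J(1) by simp
  then show ?thesis using bBA aAB lat lbt by force
qed


lemma gen_take:
  assumes "j \<le> length Bs"
  shows "S \<in> gen (take j Bs) \<longleftrightarrow> (\<exists>i<j. S \<subseteq> Bs ! i)"
proof -
  have "set (take j Bs) = {Bs ! i | i. i < j}" using assms
    by (auto simp: in_set_conv_nth nth_take) (metis le_less_trans length_take min.absorb2 nth_take)+
  then show ?thesis unfolding gen_def by auto
qed

lemma gen_single: "S \<in> gen [F] \<longleftrightarrow> S \<subseteq> F" unfolding gen_def by simp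

lemma weight_exch:
  assumes "finite B" "b \<in> B" "a \<notin> B"
  shows "weight l ((B - {b}) \<union> {a}) = weight l B - l b + l a"
proof -
  have "weight l ((B - {b}) \<union> {a}) = weight l (B - {b}) + l a"
    unfolding weight_def using assms by (simp add: sum.union_disjoint)
  moreover have "weight l B = l b + weight l (B - {b})"
    unfolding weight_def using assms by (simp add: sum.remove)
  ultimately show ?thesis by simp
qed

theorem theorem1p2:
  fixes E :: "'a set" and Ind :: "'a set set" and l :: "'a \<Rightarrow> real"
    and Bs :: "'a set list"
  assumes "matroid E Ind"
    and "generic E Ind l"
    and "set Bs = bases Ind" and "distinct Bs"
    and "sorted_wrt (\<lambda>B B'. weight l B < weight l B') Bs"
  shows "shelling_order Ind Bs \<and>
         (\<forall>j < length Bs. restriction_set Bs j = internally_passive E Ind l (Bs ! j))"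
proof -
  note m = assms(1)
  have inj: "inj_on l E" using assms(2) unfolding generic_def by simp
  have Bsb: "Bs ! i \<in> bases Ind" if "i < length Bs" for i
    using assms(3) that nth_mem by blast
  obtain B0 where B0: "B0 \<in> bases Ind" using basis_exists[OF m] by blast
  define r where "r = card B0"
  have cardr: "card B = r" if "B \<in> bases Ind" for B
    using bases_card_eq[OF m that B0] r_def by simp
  have wlt: "weight l (Bs ! i) < weight l (Bs ! j)" if "i < j" "j < length Bs" for i j
    using assms(5) that by (simp add: sorted_wrt_iff_nth_less)
  have idx: "\<exists>i<j. Bs ! i = B'" if B'b: "B' \<in> bases Ind" "weight l B' < weight l (Bs ! j)"
    "j < length Bs" for B' j
  proof -
    obtain i where i: "i < length Bs" "Bs ! i = B'" proof -
      have "B' \<in> set Bs" using B'b assms(3) by simp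
      then show ?thesis using that in_set_conv_nth[of B' Bs] by blast
    qed
    have "i < j"
    proof (rule ccontr)
      assume "\<not> i < j"
      then have "i = j \<or> j < i" by linarith
      moreover have "i = j \<Longrightarrow> False" using i that(2) by simp
      moreover have "j < i \<Longrightarrow> False" using wlt[of j i] i(1) i(2) that(2) by simp
      ultimately show False by blast
    qed
    then show ?thesis using i by blast
  qed
  have ip_earlier: "\<exists>i<j. Bs ! j - {b} \<subseteq> Bs ! i"
    if j: "j < length Bs" and b: "b \<in> internally_passive E Ind l (Bs ! j)" for j b
  proof -
    let ?B = "Bs ! j"
    obtain b' where b': "b \<in> ?B" "b' \<in> E - ?B" "l b' < l b" "(?B - {b}) \<union> {b'} \<in> bases Ind"
      using b unfolding internally_passive_def by blast
    have fB: "finite ?B" using m_fin[OF m basis_ind[OF Bsb[OF j]]] .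
    have "weight l ((?B - {b}) \<union> {b'}) < weight l ?B"
      using weight_exch[OF fB b'(1), of b' l] b' by simp
    then obtain i where "i < j" "Bs ! i = (?B - {b}) \<union> {b'}" using idx[OF b'(4) _ j] by blast
    then show ?thesis by blast
  qed
  have earlier_ip: "\<exists>b\<in>internally_passive E Ind l (Bs ! j). b \<notin> S"
    if j: "j < length Bs" and i: "i < j" and S: "S \<subseteq> Bs ! i" for i j S
  proof -
    have iL: "i < length Bs" using i j by simp
    obtain b a where ba: "b \<in> Bs ! j - Bs ! i" "a \<in> Bs ! i - Bs ! j" "l a < l b"
        "(Bs ! j - {b}) \<union> {a} \<in> bases Ind"
      using key[OF m Bsb[OF iL] Bsb[OF j] inj wlt[OF i j]] by blast
    have "a \<in> E" using m_sub[OF m basis_ind[OF Bsb[OF iL]]] ba(2) by blast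
    then have "b \<in> internally_passive E Ind l (Bs ! j)"
      unfolding internally_passive_def using ba by blast
    moreover have "b \<notin> S" using ba(1) S by blast
    ultimately show ?thesis by blast
  qed
  have shell: "shelling_order Ind Bs"
    unfolding shelling_order_def
  proof (intro conjI exI allI impI)
    show "distinct Bs" by fact
    show "set Bs = facets Ind" using assms(3) bases_def by simp
    show "pure_card Ind r" unfolding pure_card_def
    proof (intro conjI ballI)
      fix S assume S: "S \<in> Ind"
      obtain J where "J \<in> bases Ind" "S \<subseteq> J" "J \<subseteq> E"
        using extend_basis[OF m B0 S, of E] m_sub[OF m S] m_sub[OF m basis_ind[OF B0]] by blast
      then show "\<exists>T\<in>Ind. S \<subseteq> T \<and> card T = r" using basis_ind cardr by blast
    next
      fix T assume "T \<in> Ind"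
      then show "card T \<le> r" using ind_card_le[OF m _ B0] r_def by simp
    qed
    fix j assume j: "0 < j \<and> j < length Bs"
    let ?K = "gen (take j Bs) \<inter> gen [Bs ! j]"
    have K: "S \<in> ?K \<longleftrightarrow> S \<subseteq> Bs ! j \<and> (\<exists>i<j. S \<subseteq> Bs ! i)" for S
    proof -
      have jle: "j \<le> length Bs" using j by linarith
      show ?thesis unfolding Int_iff gen_single gen_take[OF jle] by blast
    qed
    have jl: "j < length Bs" using j by simp
    show "pure_card ?K (r - 1)" unfolding pure_card_def
    proof (intro conjI ballI)
      fix S assume "S \<in> ?K"
      then obtain i where S: "S \<subseteq> Bs ! j" "i < j" "S \<subseteq> Bs ! i" using K[of S] by blast
      obtain b where b: "b \<in> internally_passive E Ind l (Bs ! j)" "b \<notin> S"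
        using earlier_ip[OF jl S(2) S(3)] by blast
      obtain i' where i': "i' < j" "Bs ! j - {b} \<subseteq> Bs ! i'" using ip_earlier[OF jl b(1)] by blast
      have bB: "b \<in> Bs ! j" using b unfolding internally_passive_def by blast
      have fB: "finite (Bs ! j)" using m_fin[OF m basis_ind[OF Bsb[OF jl]]] .
      have "card (Bs ! j - {b}) = r - 1" using cardr[OF Bsb[OF jl]] bB fB by simp
      moreover have "Bs ! j - {b} \<in> ?K" using K[of "Bs ! j - {b}"] i' by blast
      moreover have "S \<subseteq> Bs ! j - {b}" using S b by blast
      ultimately show "\<exists>T\<in>?K. S \<subseteq> T \<and> card T = r - 1" by blast
    next
      fix T assume "T \<in> ?K"
      then obtain i where T: "T \<subseteq> Bs ! j" "i < j" "T \<subseteq> Bs ! i" using K[of T] by blast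
      have il: "i < length Bs" using T(2) jl by simp
      have ne: "Bs ! i \<noteq> Bs ! j" using nth_eq_iff_index_eq[OF assms(4) il jl] T(2) by simp
      have "T \<noteq> Bs ! j"
      proof
        assume "T = Bs ! j"
        then have "Bs ! j \<subseteq> Bs ! i" using T by simp
        then show False using basis_max[OF Bsb[OF jl] basis_ind[OF Bsb[OF il]]] ne by blast
      qed
      then have "T \<subset> Bs ! j" using T by blast
      moreover have fB: "finite (Bs ! j)" using m_fin[OF m basis_ind[OF Bsb[OF jl]]] .
      ultimately have "card T < card (Bs ! j)" by (simp add: psubset_card_mono)
      then show "card T \<le> r - 1" using cardr[OF Bsb[OF jl]] by simp
    qed
  qed
  have restr: "restriction_set Bs j = internally_passive E Ind l (Bs ! j)" if j: "j < length Bs" for j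
  proof -
    let ?IP = "internally_passive E Ind l (Bs ! j)"
    have IPs: "?IP \<subseteq> Bs ! j" unfolding internally_passive_def by blast
    have js: "Suc j \<le> length Bs" and jle: "j \<le> length Bs" using j by simp_all
    have eq: "gen (take (Suc j) Bs) - gen (take j Bs) = {S. ?IP \<subseteq> S \<and> S \<subseteq> Bs ! j}"
    proof (intro set_eqI iffI)
      fix S assume S0: "S \<in> gen (take (Suc j) Bs) - gen (take j Bs)"
      then have a1: "S \<in> gen (take (Suc j) Bs)" and a2: "S \<notin> gen (take j Bs)" by simp_all
      from a1[unfolded gen_take[OF js]] obtain i where i: "i < Suc j" "S \<subseteq> Bs ! i" by blast
      from a2[unfolded gen_take[OF jle]] have n: "\<not> (\<exists>i<j. S \<subseteq> Bs ! i)" .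
      have Sj: "S \<subseteq> Bs ! j" using i n less_Suc_eq by blast
      have "?IP \<subseteq> S"
      proof
        fix b assume b: "b \<in> ?IP"
        show "b \<in> S"
        proof (rule ccontr)
          assume "b \<notin> S"
          then have "S \<subseteq> Bs ! j - {b}" using Sj by blast
          then show False using ip_earlier[OF j b] n by blast
        qed
      qed
      then show "S \<in> {S. ?IP \<subseteq> S \<and> S \<subseteq> Bs ! j}" using Sj by blast
    next
      fix S assume S: "S \<in> {S. ?IP \<subseteq> S \<and> S \<subseteq> Bs ! j}"
      have "S \<subseteq> Bs ! j" using S by simp
      then have "S \<in> gen (take (Suc j) Bs)" unfolding gen_take[OF js] by blast
      moreover have "S \<notin> gen (take j Bs)"
      proof
        assume "S \<in> gen (take j Bs)"
        then obtain i where ii: "i < j" "S \<subseteq> Bs ! i" unfolding gen_take[OF jle] by blast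
        obtain b where "b \<in> ?IP" "b \<notin> S" using earlier_ip[OF j ii] by blast
        then show False using S by blast
      qed
      ultimately show "S \<in> gen (take (Suc j) Bs) - gen (take j Bs)" by blast
    qed
    show ?thesis unfolding restriction_set_def
    proof (rule the_equality)
      show "?IP \<subseteq> Bs ! j \<and> gen (take (Suc j) Bs) - gen (take j Bs) = {S. ?IP \<subseteq> S \<and> S \<subseteq> Bs ! j}"
        using IPs eq by (rule conjI)
    next
      fix R assume R: "R \<subseteq> Bs ! j \<and> gen (take (Suc j) Bs) - gen (take j Bs) = {S. R \<subseteq> S \<and> S \<subseteq> Bs ! j}"
      then have E2: "{S. R \<subseteq> S \<and> S \<subseteq> Bs ! j} = {S. ?IP \<subseteq> S \<and> S \<subseteq> Bs ! j}" using eq by (simp only:)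
      have "R \<in> {S. R \<subseteq> S \<and> S \<subseteq> Bs ! j}" using R by simp
      then have "R \<in> {S. ?IP \<subseteq> S \<and> S \<subseteq> Bs ! j}" by (simp only: E2)
      then have r1: "?IP \<subseteq> R" by simp
      have "?IP \<in> {S. ?IP \<subseteq> S \<and> S \<subseteq> Bs ! j}" using IPs by simp
      then have "?IP \<in> {S. R \<subseteq> S \<and> S \<subseteq> Bs ! j}" by (simp only: E2)
      then have r2: "R \<subseteq> ?IP" by simp
      from r1 r2 show "R = ?IP" by (rule subset_antisym[rotated])
    qed
  qed
  show ?thesis using shell restr by blast
qed

end
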